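(* Let $0<\alpha<1$, $T>0$, $N_T$ a positive integer, $\Delta t=T/N_T$, $t_k=k\Delta t$. Let $\varepsilon>0$ and let $s_i>0,\ \omega_i>0$ ($i=1,\dots,N_{\mathrm{exp}}$) satisfy $\left|t^{-1-\alpha}-\sum_{i=1}^{N_{\mathrm{exp}}}\omega_ie^{-s_it}\right|\leq\varepsilon$ for all $t\in[\Delta t,T]$. Let $1\leq n\leq N_T$, let $u\in C^2[0,t_n]$ and set $u^k=u(t_k)$. Then $$\left|{}_0^C D_t^\alpha u(t)\big|_{t=t_n}-{}^{FC}_{0}\mathbb{D}_t^\alpha u^n\right|\leq\frac{\Delta t^{2-\alpha}}{\Gamma(2-\alpha)}\left(\frac{1-\alpha}{12}+\frac{2^{2-\alpha}}{2-\alpha}-(1+2^{-\alpha})\right)\max_{0\leq t\leq t_n}|u''(t)|+\frac{\alpha\varepsilon\, t_{n-1}}{\Gamma(1-\alpha)}\max_{0\leq t\leq t_{n-1}}|u(t)|.$$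
   Context: The Caputo derivative of order $\alpha\in(0,1)$ is ${}_0^C D_t^\alpha u(t)=\frac{1}{\Gamma(1-\alpha)}\int_0^t\frac{u'(\tau)}{(t-\tau)^\alpha}d\tau$. For values $u^0,\dots,u^{N_T}$ on the grid $t_k=k\Delta t$, let $\Pi_{1,l}u(\tau)=u^{l-1}\frac{t_l-\tau}{\Delta t}+u^l\frac{\tau-t_{l-1}}{\Delta t}$ on $[t_{l-1},t_l]$, let $U_{i}(t_n)=\sum_{l=1}^{n-1}\int_{t_{l-1}}^{t_l}e^{-s_i(t_n-\tau)}\Pi_{1,l}u(\tau)\,d\tau$ (empty sum $=0$ when $n=1$), and define the fast approximation, for $1\le n\le N_T$, $${}^{FC}_{0}\mathbb{D}_t^\alpha u^n=\frac{u^n-u^{n-1}}{\Delta t^\alpha\Gamma(2-\alpha)}+\frac{1}{\Gamma(1-\alpha)}\left[\frac{u^{n-1}}{\Delta t^\alpha}-\frac{u^0}{t_n^\alpha}-\alpha\sum_{i=1}^{N_{\mathrm{exp}}}\omega_iU_i(t_n)\right].$$ (For $n=1$ this equals $\frac{u^1-u^0}{\Delta t^\alpha\Gamma(2-\alpha)}$.) *)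

theory Defs
  imports "HOL-Analysis.Analysis"
begin

text \<open>Caputo derivative of order alpha at time t, for a function whose derivative
  (on [0,t]) is the given function du.\<close>
definition caputo :: "real \<Rightarrow> (real \<Rightarrow> real) \<Rightarrow> real \<Rightarrow> real" where
  "caputo \<alpha> du t = (1 / Gamma (1 - \<alpha>)) * integral {0..t} (\<lambda>\<tau>. du \<tau> / (t - \<tau>) powr \<alpha>)"

definition Pi1 :: "real \<Rightarrow> (nat \<Rightarrow> real) \<Rightarrow> nat \<Rightarrow> real \<Rightarrow> real" where
  "Pi1 dt uv l \<tau> = uv (l - 1) * (real l * dt - \<tau>) / dt + uv l * (\<tau> - real (l - 1) * dt) / dt"

definition Uhist :: "real \<Rightarrow> (nat \<Rightarrow> real) \<Rightarrow> real \<Rightarrow> nat \<Rightarrow> real" where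
  "Uhist dt uv si n = (\<Sum>l = 1..n - 1.
      integral {real (l - 1) * dt .. real l * dt}
        (\<lambda>\<tau>. exp (- si * (real n * dt - \<tau>)) * Pi1 dt uv l \<tau>))"

definition fast_caputo :: "real \<Rightarrow> real \<Rightarrow> nat \<Rightarrow> (nat \<Rightarrow> real) \<Rightarrow> (nat \<Rightarrow> real)
    \<Rightarrow> (nat \<Rightarrow> real) \<Rightarrow> nat \<Rightarrow> real" where
  "fast_caputo \<alpha> dt Nexp s \<omega> uv n =
     (uv n - uv (n - 1)) / (dt powr \<alpha> * Gamma (2 - \<alpha>))
     + (1 / Gamma (1 - \<alpha>)) *
       (uv (n - 1) / dt powr \<alpha> - uv 0 / (real n * dt) powr \<alpha>
        - \<alpha> * (\<Sum>i = 1..Nexp. \<omega> i * Uhist dt uv (s i) n))"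

end

theory Submission
  imports Defs
begin


lemma interp_err:
  fixes u du ddu :: "real \<Rightarrow> real" and a b x M :: real
  assumes ab: "a < b" and x: "a \<le> x" "x \<le> b"
    and d1: "\<And>y. y \<in> {a..b} \<Longrightarrow> (u has_real_derivative du y) (at y within {a..b})"
    and d2: "\<And>y. y \<in> {a..b} \<Longrightarrow> (du has_real_derivative ddu y) (at y within {a..b})"
    and M: "\<And>y. y \<in> {a..b} \<Longrightarrow> \<bar>ddu y\<bar> \<le> M"
  shows "\<bar>u x - (u a * (b - x) + u b * (x - a)) / (b - a)\<bar> \<le> M / 2 * ((x - a) * (b - x))"
proof (cases "x = a \<or> x = b")
  case True
  then show ?thesis using ab by (auto simp: field_simps)
next
  case False
  with x have ax: "a < x" and xb: "x < b" by auto
  define e where "e y = u y - (u a * (b - y) + u b * (y - a)) / (b - a)" for y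
  define c where "c = e x / ((x - a) * (b - x))"
  define \<phi> where "\<phi> y = e y - c * ((y - a) * (b - y))" for y
  define \<phi>' where "\<phi>' y = du y - (u b - u a) / (b - a) - c * (a + b - 2 * y)" for y
  have dphi: "(\<phi> has_real_derivative \<phi>' y) (at y within {a..b})" if "y \<in> {a..b}" for y
    unfolding \<phi>_def \<phi>'_def e_def
    using ab by (auto intro!: derivative_eq_intros d1[OF that])
  have dphi': "(\<phi>' has_real_derivative (ddu y + 2 * c)) (at y within {a..b})" if "y \<in> {a..b}" for y
    unfolding \<phi>'_def
    by (auto intro!: derivative_eq_intros d2[OF that])
  have pa1: "\<phi> a = 0" "\<phi> b = 0"
    using ab by (auto simp: \<phi>_def e_def)
  have pa2: "\<phi> x = 0"
    using ax xb by (simp add: \<phi>_def c_def)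
  note pa = pa1 pa2
  have s1: "(\<phi> has_derivative (\<lambda>v. \<phi>' y * v)) (at y within {a..x})" if "a \<le> y" "y \<le> x" for y
  proof -
    have "(\<phi> has_real_derivative \<phi>' y) (at y within {a..x})"
      by (rule DERIV_subset[OF dphi]) (use that xb in auto)
    then show ?thesis by (simp add: has_field_derivative_def)
  qed
  have s2: "(\<phi> has_derivative (\<lambda>v. \<phi>' y * v)) (at y within {x..b})" if "x \<le> y" "y \<le> b" for y
  proof -
    have "(\<phi> has_real_derivative \<phi>' y) (at y within {x..b})"
      by (rule DERIV_subset[OF dphi]) (use that ax in auto)
    then show ?thesis by (simp add: has_field_derivative_def)
  qed
  obtain \<xi>1 where \<xi>1: "\<xi>1 \<in> {a<..<x}" "\<phi> x - \<phi> a = \<phi>' \<xi>1 * (x - a)"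
    using mvt_simple[OF ax, of \<phi> "\<lambda>y v. \<phi>' y * v"] s1 by blast
  obtain \<xi>2 where \<xi>2: "\<xi>2 \<in> {x<..<b}" "\<phi> b - \<phi> x = \<phi>' \<xi>2 * (b - x)"
    using mvt_simple[OF xb, of \<phi> "\<lambda>y v. \<phi>' y * v"] s2 by blast
  have z1: "\<phi>' \<xi>1 = 0" using \<xi>1 pa ax by auto
  have z2: "\<phi>' \<xi>2 = 0" using \<xi>2 pa xb by auto
  have lt: "\<xi>1 < \<xi>2" using \<xi>1 \<xi>2 by auto
  have s3: "(\<phi>' has_derivative (\<lambda>v. (ddu y + 2 * c) * v)) (at y within {\<xi>1..\<xi>2})" if "\<xi>1 \<le> y" "y \<le> \<xi>2" for y
  proof -
    have "(\<phi>' has_real_derivative (ddu y + 2 * c)) (at y within {\<xi>1..\<xi>2})"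
      by (rule DERIV_subset[OF dphi']) (use that \<xi>1 \<xi>2 in auto)
    then show ?thesis by (simp add: has_field_derivative_def)
  qed
  obtain \<eta> where \<eta>: "\<eta> \<in> {\<xi>1<..<\<xi>2}" "\<phi>' \<xi>2 - \<phi>' \<xi>1 = (ddu \<eta> + 2 * c) * (\<xi>2 - \<xi>1)"
    using mvt_simple[OF lt, of \<phi>' "\<lambda>y v. (ddu y + 2 * c) * v"] s3 by blast
  have "ddu \<eta> + 2 * c = 0" using \<eta> z1 z2 lt by auto
  moreover have "\<eta> \<in> {a..b}" using \<eta> \<xi>1 \<xi>2 by auto
  ultimately have "\<bar>c\<bar> \<le> M / 2" using M by force
  moreover have "e x = c * ((x - a) * (b - x))" using ax xb by (simp add: c_def)
  moreover have "(x - a) * (b - x) > 0" using ax xb by simp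
  ultimately have "\<bar>e x\<bar> \<le> M / 2 * ((x - a) * (b - x))"
    by (metis abs_mult abs_of_pos mult_right_mono less_imp_le)
  then show ?thesis by (simp add: e_def)
qed
lemma powr_mult_self:
  fixes x q :: real
  assumes "0 < x"
  shows "x * x powr (q - 1) = x powr q"
proof -
  have "x powr q = x powr ((q - 1) + 1)" by simp
  also have "\<dots> = x powr (q - 1) * x powr 1" by (rule powr_add)
  also have "\<dots> = x powr (q - 1) * x" using assms by simp
  finally show ?thesis by (metis mult.commute)
qed

lemma powr_kernel_deriv:
  fixes b y p :: real
  assumes "y < b"
  shows "((\<lambda>y. (b - y) powr p) has_real_derivative (- p * (b - y) powr (p - 1))) (at y)"
  using assms by (auto intro!: derivative_eq_intros)

lemma has_integral_kernel:
  fixes a b p :: real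
  assumes ab: "a \<le> b" and p: "0 < p"
  shows "((\<lambda>y. (b - y) powr (p - 1)) has_integral ((b - a) powr p / p)) {a..b}"
proof -
  have "((\<lambda>y. (b - y) powr (p - 1)) has_integral ((\<lambda>y. - ((b - y) powr p) / p) b - (\<lambda>y. - ((b - y) powr p) / p) a)) {a..b}"
  proof (rule fundamental_theorem_of_calculus_interior_strong[of "{}"])
    show "continuous_on {a..b} (\<lambda>y. - ((b - y) powr p) / p)"
      using p by (auto intro!: continuous_intros continuous_on_powr')
    fix y assume "y \<in> {a<..<b} - {}"
    then have "y < b" by auto
    have "((\<lambda>y. - ((b - y) powr p) / p) has_real_derivative (- (- p * (b - y) powr (p - 1)) / p)) (at y)"
      by (rule DERIV_cdivide[OF DERIV_minus[OF powr_kernel_deriv[OF \<open>y < b\<close>]]])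
    then show "((\<lambda>y. - ((b - y) powr p) / p) has_vector_derivative (b - y) powr (p - 1)) (at y)"
      using p by (simp add: has_real_derivative_iff_has_vector_derivative)
  qed (use ab in auto)
  then show ?thesis using p by simp
qed

lemma last_interval:
  fixes u du ddu :: "real \<Rightarrow> real" and a b \<alpha> M :: real
  assumes ab: "a < b" and al: "0 < \<alpha>" "\<alpha> < 1"
    and d1: "\<And>y. y \<in> {a..b} \<Longrightarrow> (u has_real_derivative du y) (at y within {a..b})"
    and d2: "\<And>y. y \<in> {a..b} \<Longrightarrow> (du has_real_derivative ddu y) (at y within {a..b})"
    and M: "\<And>y. y \<in> {a..b} \<Longrightarrow> \<bar>ddu y\<bar> \<le> M"
  shows "\<exists>R. ((\<lambda>\<tau>. du \<tau> * (b - \<tau>) powr (- \<alpha>)) has_integral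
              ((u b - u a) / (b - a) * ((b - a) powr (1 - \<alpha>) / (1 - \<alpha>)) + R)) {a..b}
           \<and> \<bar>R\<bar> \<le> \<alpha> * M / 2 * ((b - a) powr (2 - \<alpha>) / ((1 - \<alpha>) * (2 - \<alpha>)))"
proof -
  define d where "d = (u b - u a) / (b - a)"
  define e where "e y = u y - (u a * (b - y) + u b * (y - a)) / (b - a)" for y
  define g where "g y = \<alpha> * e y * (b - y) powr (- \<alpha> - 1)" for y
  define G where "G y = e y * (b - y) powr (- \<alpha>)" for y
  define k where "k y = \<alpha> * M / 2 * ((b - a) * (b - y) powr ((1 - \<alpha>) - 1) - (b - y) powr ((2 - \<alpha>) - 1))" for y
  have ie: "\<bar>e y\<bar> \<le> M / 2 * ((y - a) * (b - y))" if "y \<in> {a..b}" for y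
    unfolding e_def using interp_err[OF ab _ _ d1 d2 M] that by auto
  have ea: "e a = 0" and eb: "e b = 0" using ab by (auto simp: e_def)
  have de: "(e has_real_derivative (du y - d)) (at y within {a..b})" if "y \<in> {a..b}" for y
    unfolding e_def d_def using ab
    by (auto intro!: derivative_eq_intros d1[OF that])
  have ce: "continuous_on {a..b} e" using de by (rule DERIV_continuous_on)
  have M0: "0 \<le> M" using M[of a] ab by auto
  have Gb: "\<bar>G y\<bar> \<le> M / 2 * (b - a) * (b - y) powr (1 - \<alpha>)" if "y \<in> {a..b}" for y
  proof (cases "y = b")
    case True then show ?thesis by (simp add: G_def)
  next
    case False
    with that have yb: "y < b" by auto
    have "\<bar>G y\<bar> = \<bar>e y\<bar> * (b - y) powr (- \<alpha>)" by (simp add: G_def abs_mult)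
    also have "\<dots> \<le> M / 2 * ((y - a) * (b - y)) * (b - y) powr (- \<alpha>)"
      by (rule mult_right_mono[OF ie[OF that]]) simp
    also have "\<dots> = M / 2 * (y - a) * ((b - y) * (b - y) powr (- \<alpha>))"
      by (simp only: mult.assoc)
    also have "\<dots> = M / 2 * (y - a) * (b - y) powr (1 - \<alpha>)"
      using powr_mult_self[of "b - y" "1 - \<alpha>"] yb by simp
    also have "\<dots> \<le> M / 2 * (b - a) * (b - y) powr (1 - \<alpha>)"
      using that M0 by (intro mult_right_mono mult_left_mono) auto
    finally show ?thesis .
  qed
  have cG: "continuous_on {a..b} G"
    unfolding continuous_on_def
  proof
    fix x assume x: "x \<in> {a..b}"
    show "(G \<longlongrightarrow> G x) (at x within {a..b})"
    proof (cases "x = b")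
      case True
      have "G b = 0" by (simp add: G_def)
      have c1: "continuous_on {a..b} (\<lambda>y. M / 2 * (b - a) * (b - y) powr (1 - \<alpha>))"
        using al by (auto intro!: continuous_intros continuous_on_powr')
      have "((\<lambda>y. M / 2 * (b - a) * (b - y) powr (1 - \<alpha>)) \<longlongrightarrow> 0) (at b within {a..b})"
      proof -
        have "((\<lambda>y. M / 2 * (b - a) * (b - y) powr (1 - \<alpha>)) \<longlongrightarrow> M / 2 * (b - a) * (b - b) powr (1 - \<alpha>)) (at b within {a..b})"
          using c1[unfolded continuous_on_def, rule_format, of b] ab by simp
        then show ?thesis by simp
      qed
      then have "(G \<longlongrightarrow> 0) (at b within {a..b})"
      proof (rule Lim_null_comparison[rotated])
        show "\<forall>\<^sub>F y in at b within {a..b}. norm (G y) \<le> M / 2 * (b - a) * (b - y) powr (1 - \<alpha>)"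
          unfolding eventually_at_filter by (intro always_eventually allI impI) (metis Gb real_norm_def)
      qed
      then show ?thesis using True \<open>G b = 0\<close> by simp
    next
      case False
      with x have xb: "x < b" by auto
      have "((\<lambda>y. (b - y) powr (- \<alpha>)) \<longlongrightarrow> (b - x) powr (- \<alpha>)) (at x within {a..b})"
        using xb by (auto intro!: tendsto_intros)
      moreover have "(e \<longlongrightarrow> e x) (at x within {a..b})"
        using ce x unfolding continuous_on_def by blast
      ultimately show ?thesis unfolding G_def by (intro tendsto_mult)
    qed
  qed
  have hG: "((\<lambda>y. (du y - d) * (b - y) powr (- \<alpha>) + g y) has_integral (G b - G a)) {a..b}"
  proof (rule fundamental_theorem_of_calculus_interior_strong[of "{}"])
    fix y assume "y \<in> {a<..<b} - {}"
    then have y: "a < y" "y < b" by auto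
    have "(e has_real_derivative (du y - d)) (at y)"
      using de[of y] y at_within_interior[of y "{a..b}"] by auto
    then have "(G has_real_derivative ((du y - d) * (b - y) powr (- \<alpha>) + (- (- \<alpha>) * (b - y) powr (- \<alpha> - 1)) * e y)) (at y)"
      unfolding G_def by (rule DERIV_mult[OF _ powr_kernel_deriv[OF y(2)]])
    then show "(G has_vector_derivative (du y - d) * (b - y) powr (- \<alpha>) + g y) (at y)"
      by (simp add: has_real_derivative_iff_has_vector_derivative g_def algebra_simps)
  qed (use ab cG in auto)
  then have hG0: "((\<lambda>y. (du y - d) * (b - y) powr (- \<alpha>) + g y) has_integral 0) {a..b}"
    by (simp add: G_def ea eb)
  have hk: "(k has_integral (\<alpha> * M / 2 * ((b - a) * ((b - a) powr (1 - \<alpha>) / (1 - \<alpha>)) - (b - a) powr (2 - \<alpha>) / (2 - \<alpha>)))) {a..b}"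
    unfolding k_def
    using has_integral_kernel[of a b "1 - \<alpha>"] has_integral_kernel[of a b "2 - \<alpha>"] ab al
    by (intro has_integral_mult_right has_integral_diff) auto
  have kval: "\<alpha> * M / 2 * ((b - a) * ((b - a) powr (1 - \<alpha>) / (1 - \<alpha>)) - (b - a) powr (2 - \<alpha>) / (2 - \<alpha>))
     = \<alpha> * M / 2 * ((b - a) powr (2 - \<alpha>) / ((1 - \<alpha>) * (2 - \<alpha>)))"
  proof -
    have "(b - a) * (b - a) powr (1 - \<alpha>) = (b - a) powr (2 - \<alpha>)"
      using powr_mult_self[of "b - a" "2 - \<alpha>"] ab by simp
    then show ?thesis using al by (simp add: field_simps)
  qed
  have gk: "\<bar>g y\<bar> \<le> k y" if "y \<in> {a..b}" for y
  proof (cases "y = b")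
    case True then show ?thesis by (simp add: g_def k_def)
  next
    case False
    with that have yb: "y < b" and ay: "a \<le> y" by auto
    have "\<bar>g y\<bar> = \<alpha> * \<bar>e y\<bar> * (b - y) powr (- \<alpha> - 1)" using al by (simp add: g_def abs_mult)
    also have "\<dots> \<le> \<alpha> * (M / 2 * ((y - a) * (b - y))) * (b - y) powr (- \<alpha> - 1)"
      using ie[OF that] al by (intro mult_right_mono mult_left_mono) auto
    also have "\<dots> = \<alpha> * M / 2 * (y - a) * ((b - y) * (b - y) powr (- \<alpha> - 1))"
      by (simp only: mult.assoc times_divide_eq_left)
    also have "\<dots> = \<alpha> * M / 2 * (y - a) * (b - y) powr (- \<alpha>)"
      using powr_mult_self[of "b - y" "- \<alpha>"] yb by simp
    also have "\<dots> = k y"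
    proof -
      have pw: "(b - y) powr (1 - \<alpha>) = (b - y) * (b - y) powr (- \<alpha>)"
        using powr_mult_self[of "b - y" "1 - \<alpha>"] yb by simp
      have "k y = \<alpha> * M / 2 * ((b - a) * (b - y) powr (- \<alpha>) - (b - y) powr (1 - \<alpha>))"
        by (simp add: k_def)
      also have "\<dots> = \<alpha> * M / 2 * ((b - a) * (b - y) powr (- \<alpha>) - (b - y) * (b - y) powr (- \<alpha>))"
        by (simp only: pw)
      also have "\<dots> = \<alpha> * M / 2 * (y - a) * (b - y) powr (- \<alpha>)"
        by (simp add: algebra_simps)
      finally show ?thesis by simp
    qed
    finally show ?thesis .
  qed
  have gmeas: "g \<in> borel_measurable (lebesgue_on {a<..<b})"
  proof (rule continuous_imp_measurable_on_sets_lebesgue)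
    have "continuous_on {a<..<b} e" using ce by (rule continuous_on_subset) auto
    then show "continuous_on {a<..<b} g"
      unfolding g_def by (auto intro!: continuous_intros)
  qed auto
  have kint: "k integrable_on {a<..<b}"
    using has_integral_integrable[OF hk] integrable_on_Icc_iff_Ioo by blast
  have "g integrable_on {a<..<b}"
    by (rule measurable_bounded_by_integrable_imp_integrable_real[OF gmeas kint]) (use gk in auto)
  then have gint: "g integrable_on {a..b}"
    using integrable_on_Icc_iff_Ioo by blast
  have gbound: "\<bar>integral {a..b} g\<bar> \<le> \<alpha> * M / 2 * ((b - a) powr (2 - \<alpha>) / ((1 - \<alpha>) * (2 - \<alpha>)))"
  proof -
    have "norm (integral {a..b} g) \<le> integral {a..b} k"
      by (rule integral_norm_bound_integral[OF gint has_integral_integrable[OF hk]]) (use gk in auto)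
    then have "\<bar>integral {a..b} g\<bar> \<le> integral {a..b} k" by simp
    also have "integral {a..b} k = \<alpha> * M / 2 * ((b - a) powr (2 - \<alpha>) / ((1 - \<alpha>) * (2 - \<alpha>)))"
      using integral_unique[OF hk] kval by (simp only:)
    finally show ?thesis .
  qed
  have hd: "((\<lambda>y. d * (b - y) powr (- \<alpha>)) has_integral (d * ((b - a) powr (1 - \<alpha>) / (1 - \<alpha>)))) {a..b}"
    using has_integral_mult_right[OF has_integral_kernel[of a b "1 - \<alpha>"]] ab al by simp
  have "((\<lambda>y. ((du y - d) * (b - y) powr (- \<alpha>) + g y) - g y + d * (b - y) powr (- \<alpha>))
          has_integral (0 - integral {a..b} g + d * ((b - a) powr (1 - \<alpha>) / (1 - \<alpha>)))) {a..b}"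
    by (intro has_integral_add has_integral_diff hG0 hd integrable_integral gint)
  then have "((\<lambda>\<tau>. du \<tau> * (b - \<tau>) powr (- \<alpha>)) has_integral
              ((u b - u a) / (b - a) * ((b - a) powr (1 - \<alpha>) / (1 - \<alpha>)) + (- integral {a..b} g))) {a..b}"
    by (simp add: algebra_simps d_def)
  then show ?thesis using gbound by (intro exI[of _ "- integral {a..b} g"]) auto
qed



lemma mid_interval:
  fixes u du :: "real \<Rightarrow> real" and a b c \<alpha> :: real
  assumes ab: "a < b" and bc: "b < c"
    and d1: "\<And>y. y \<in> {a..b} \<Longrightarrow> (u has_real_derivative du y) (at y within {a..b})"
  shows "((\<lambda>\<tau>. du \<tau> * (c - \<tau>) powr (- \<alpha>)) has_integral
           (u b * (c - b) powr (- \<alpha>) - u a * (c - a) powr (- \<alpha>)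
            - \<alpha> * integral {a..b} (\<lambda>\<tau>. u \<tau> * (c - \<tau>) powr (- \<alpha> - 1)))) {a..b}"
proof -
  have cu: "continuous_on {a..b} u" using d1 by (rule DERIV_continuous_on)
  have int2: "(\<lambda>\<tau>. u \<tau> * (c - \<tau>) powr (- \<alpha> - 1)) integrable_on {a..b}"
    using bc by (intro integrable_continuous_interval continuous_intros cu) auto
  have "((\<lambda>\<tau>. du \<tau> * (c - \<tau>) powr (- \<alpha>) + \<alpha> * (u \<tau> * (c - \<tau>) powr (- \<alpha> - 1))) has_integral
          (u b * (c - b) powr (- \<alpha>) - u a * (c - a) powr (- \<alpha>))) {a..b}"
  proof (rule fundamental_theorem_of_calculus[where f = "\<lambda>\<tau>. u \<tau> * (c - \<tau>) powr (- \<alpha>)"])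
    fix y assume y: "y \<in> {a..b}"
    then have "y < c" using bc by auto
    have "((\<lambda>\<tau>. u \<tau> * (c - \<tau>) powr (- \<alpha>)) has_real_derivative
           (du y * (c - y) powr (- \<alpha>) + u y * (- (- \<alpha>) * (c - y) powr (- \<alpha> - 1)))) (at y within {a..b})"
      using DERIV_mult[OF d1[OF y] has_field_derivative_at_within[OF powr_kernel_deriv[OF \<open>y < c\<close>, where p = "- \<alpha>"]]]
      by (simp add: algebra_simps)
    then show "((\<lambda>\<tau>. u \<tau> * (c - \<tau>) powr (- \<alpha>)) has_vector_derivative
           (du y * (c - y) powr (- \<alpha>) + \<alpha> * (u y * (c - y) powr (- \<alpha> - 1)))) (at y within {a..b})"
      by (simp add: has_real_derivative_iff_has_vector_derivative algebra_simps)
  qed (use ab in auto)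
  from has_integral_diff[OF this has_integral_mult_right[OF integrable_integral[OF int2], of \<alpha>]]
  show ?thesis by simp
qed

lemma S_bound:
  fixes u du ddu :: "real \<Rightarrow> real" and a b c \<alpha> M :: real
  assumes ab: "a < b" and bc: "b < c"
    and d1: "\<And>y. y \<in> {a..b} \<Longrightarrow> (u has_real_derivative du y) (at y within {a..b})"
    and d2: "\<And>y. y \<in> {a..b} \<Longrightarrow> (du has_real_derivative ddu y) (at y within {a..b})"
    and M: "\<And>y. y \<in> {a..b} \<Longrightarrow> \<bar>ddu y\<bar> \<le> M"
    and interp: "\<And>y. interp y = (u a * (b - y) + u b * (y - a)) / (b - a)"
  shows "\<bar>integral {a..b} (\<lambda>\<tau>. (u \<tau> - interp \<tau>) * (c - \<tau>) powr (- \<alpha> - 1))\<bar>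
         \<le> M / 2 * integral {a..b} (\<lambda>\<tau>. (\<tau> - a) * (b - \<tau>) * (c - \<tau>) powr (- \<alpha> - 1))"
    and "(\<lambda>\<tau>. (u \<tau> - interp \<tau>) * (c - \<tau>) powr (- \<alpha> - 1)) integrable_on {a..b}"
proof -
  have cu: "continuous_on {a..b} u" using d1 by (rule DERIV_continuous_on)
  have ci: "continuous_on {a..b} interp" unfolding interp by (intro continuous_intros) (use ab in auto)
  show int1: "(\<lambda>\<tau>. (u \<tau> - interp \<tau>) * (c - \<tau>) powr (- \<alpha> - 1)) integrable_on {a..b}"
    using bc by (intro integrable_continuous_interval continuous_intros cu ci) auto
  have int2: "(\<lambda>\<tau>. M / 2 * ((\<tau> - a) * (b - \<tau>) * (c - \<tau>) powr (- \<alpha> - 1))) integrable_on {a..b}"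
    using bc by (intro integrable_continuous_interval continuous_intros) auto
  have "norm (integral {a..b} (\<lambda>\<tau>. (u \<tau> - interp \<tau>) * (c - \<tau>) powr (- \<alpha> - 1)))
        \<le> integral {a..b} (\<lambda>\<tau>. M / 2 * ((\<tau> - a) * (b - \<tau>) * (c - \<tau>) powr (- \<alpha> - 1)))"
  proof (rule integral_norm_bound_integral[OF int1 int2])
    fix x assume x: "x \<in> {a..b}"
    have "\<bar>u x - interp x\<bar> \<le> M / 2 * ((x - a) * (b - x))"
      unfolding interp using interp_err[OF ab _ _ d1 d2 M] x by auto
    then have "\<bar>u x - interp x\<bar> * (c - x) powr (- \<alpha> - 1) \<le> M / 2 * ((x - a) * (b - x)) * (c - x) powr (- \<alpha> - 1)"
      by (rule mult_right_mono) simp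
    then show "norm ((u x - interp x) * (c - x) powr (- \<alpha> - 1)) \<le> M / 2 * ((x - a) * (b - x) * (c - x) powr (- \<alpha> - 1))"
      by (simp add: abs_mult mult.assoc)
  qed
  then show "\<bar>integral {a..b} (\<lambda>\<tau>. (u \<tau> - interp \<tau>) * (c - \<tau>) powr (- \<alpha> - 1))\<bar>
         \<le> M / 2 * integral {a..b} (\<lambda>\<tau>. (\<tau> - a) * (b - \<tau>) * (c - \<tau>) powr (- \<alpha> - 1))"
    by simp
qed

lemma Q_bound:
  fixes a b c \<alpha> :: real
  assumes ab: "a < b" and bc: "b < c" and al: "0 < \<alpha>"
  shows "integral {a..b} (\<lambda>\<tau>. (\<tau> - a) * (b - \<tau>) * (c - \<tau>) powr (- \<alpha> - 1))
         \<le> (b - a) ^ 3 / 6 * (c - b) powr (- \<alpha> - 1)"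
proof -
  have hp: "((\<lambda>\<tau>. (\<tau> - a) * (b - \<tau>)) has_integral ((b - a) ^ 3 / 6)) {a..b}"
  proof -
    have "((\<lambda>\<tau>. (\<tau> - a) * (b - \<tau>)) has_integral
       ((\<lambda>\<tau>. (a + b) * \<tau> * \<tau> / 2 - \<tau> * \<tau> * \<tau> / 3 - a * b * \<tau>) b - (\<lambda>\<tau>. (a + b) * \<tau> * \<tau> / 2 - \<tau> * \<tau> * \<tau> / 3 - a * b * \<tau>) a)) {a..b}"
    proof (rule fundamental_theorem_of_calculus)
      fix x assume "x \<in> {a..b}"
      have "((\<lambda>\<tau>. (a + b) * \<tau> * \<tau> / 2 - \<tau> * \<tau> * \<tau> / 3 - a * b * \<tau>) has_real_derivative (x - a) * (b - x)) (at x within {a..b})"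
        by (auto intro!: derivative_eq_intros simp: algebra_simps)
      then show "((\<lambda>\<tau>. (a + b) * \<tau> * \<tau> / 2 - \<tau> * \<tau> * \<tau> / 3 - a * b * \<tau>) has_vector_derivative (x - a) * (b - x)) (at x within {a..b})"
        by (simp add: has_real_derivative_iff_has_vector_derivative)
    qed (use ab in auto)
    moreover have "(\<lambda>\<tau>. (a + b) * \<tau> * \<tau> / 2 - \<tau> * \<tau> * \<tau> / 3 - a * b * \<tau>) b - (\<lambda>\<tau>. (a + b) * \<tau> * \<tau> / 2 - \<tau> * \<tau> * \<tau> / 3 - a * b * \<tau>) a = (b - a) ^ 3 / 6"
      by (simp add: power3_eq_cube algebra_simps divide_simps)
    ultimately show ?thesis by (simp only:)
  qed
  have "integral {a..b} (\<lambda>\<tau>. (\<tau> - a) * (b - \<tau>) * (c - \<tau>) powr (- \<alpha> - 1))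
        \<le> integral {a..b} (\<lambda>\<tau>. (\<tau> - a) * (b - \<tau>) * (c - b) powr (- \<alpha> - 1))"
  proof (rule integral_le)
    show "(\<lambda>\<tau>. (\<tau> - a) * (b - \<tau>) * (c - \<tau>) powr (- \<alpha> - 1)) integrable_on {a..b}"
      using bc by (intro integrable_continuous_interval continuous_intros) auto
    show "(\<lambda>\<tau>. (\<tau> - a) * (b - \<tau>) * (c - b) powr (- \<alpha> - 1)) integrable_on {a..b}"
      by (intro integrable_continuous_interval continuous_intros)
    fix x assume x: "x \<in> {a..b}"
    have "(c - x) powr (- \<alpha> - 1) \<le> (c - b) powr (- \<alpha> - 1)"
      using x bc al by (intro powr_mono2') auto
    then show "(x - a) * (b - x) * (c - x) powr (- \<alpha> - 1) \<le> (x - a) * (b - x) * (c - b) powr (- \<alpha> - 1)"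
      using x by (intro mult_left_mono) auto
  qed
  also have "\<dots> = (b - a) ^ 3 / 6 * (c - b) powr (- \<alpha> - 1)"
    using integral_unique[OF has_integral_mult_left[OF hp, of "(c - b) powr (- \<alpha> - 1)"]] by simp
  finally show ?thesis .
qed



lemma Q_exact:
  fixes c h \<alpha> :: real
  assumes h: "0 < h" and al: "0 < \<alpha>" "\<alpha> < 1"
  shows "((\<lambda>\<tau>. (\<tau> - (c - 2 * h)) * ((c - h) - \<tau>) * (c - \<tau>) powr (- \<alpha> - 1)) has_integral
           h powr (2 - \<alpha>) * ((1 - 4 * 2 powr (- \<alpha>)) / (2 - \<alpha>) - 3 * (1 - 2 * 2 powr (- \<alpha>)) / (1 - \<alpha>)
              - 2 * (1 - 2 powr (- \<alpha>)) / \<alpha>)) {c - 2 * h .. c - h}"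
proof -
  define F where "F \<tau> = (c - \<tau>) powr (2 - \<alpha>) / (2 - \<alpha>) - 3 * h * (c - \<tau>) powr (1 - \<alpha>) / (1 - \<alpha>)
      - 2 * h\<^sup>2 * (c - \<tau>) powr (- \<alpha>) / \<alpha>" for \<tau>
  have "((\<lambda>\<tau>. (\<tau> - (c - 2 * h)) * ((c - h) - \<tau>) * (c - \<tau>) powr (- \<alpha> - 1)) has_integral (F (c - h) - F (c - 2 * h))) {c - 2 * h .. c - h}"
  proof (rule fundamental_theorem_of_calculus)
    fix \<tau> assume t: "\<tau> \<in> {c - 2 * h .. c - h}"
    then have tc: "\<tau> < c" using h by auto
    define y where "y = c - \<tau>"
    have y0: "0 < y" using tc by (simp add: y_def)
    have "(F has_real_derivative
        (- (2 - \<alpha>) * (c - \<tau>) powr ((2 - \<alpha>) - 1) / (2 - \<alpha>)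
         - 3 * h * (- (1 - \<alpha>) * (c - \<tau>) powr ((1 - \<alpha>) - 1)) / (1 - \<alpha>)
         - 2 * h\<^sup>2 * (- (- \<alpha>) * (c - \<tau>) powr (- \<alpha> - 1)) / \<alpha>)) (at \<tau>)"
      unfolding F_def
      by (intro DERIV_diff DERIV_cdivide DERIV_cmult powr_kernel_deriv tc)
    moreover have "- (2 - \<alpha>) * (c - \<tau>) powr ((2 - \<alpha>) - 1) / (2 - \<alpha>)
         - 3 * h * (- (1 - \<alpha>) * (c - \<tau>) powr ((1 - \<alpha>) - 1)) / (1 - \<alpha>)
         - 2 * h\<^sup>2 * (- (- \<alpha>) * (c - \<tau>) powr (- \<alpha> - 1)) / \<alpha>
       = (\<tau> - (c - 2 * h)) * ((c - h) - \<tau>) * (c - \<tau>) powr (- \<alpha> - 1)"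
    proof -
      have e1: "y * y powr (- \<alpha> - 1) = y powr (- \<alpha>)" using powr_mult_self[OF y0, of "- \<alpha>"] by simp
      have e2: "y * y powr (- \<alpha>) = y powr (1 - \<alpha>)" using powr_mult_self[OF y0, of "1 - \<alpha>"] by simp
      have "(\<tau> - (c - 2 * h)) * ((c - h) - \<tau>) * y powr (- \<alpha> - 1)
          = (2 * h - y) * (y - h) * y powr (- \<alpha> - 1)" by (simp add: y_def algebra_simps)
      also have "\<dots> = - (y * (y * y powr (- \<alpha> - 1))) + 3 * h * (y * y powr (- \<alpha> - 1)) - 2 * h\<^sup>2 * y powr (- \<alpha> - 1)"
        by (simp add: algebra_simps power2_eq_square)
      also have "\<dots> = - (y powr (1 - \<alpha>)) + 3 * h * y powr (- \<alpha>) - 2 * h\<^sup>2 * y powr (- \<alpha> - 1)"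
        by (simp add: e1 e2)
      finally have ch: "(\<tau> - (c - 2 * h)) * ((c - h) - \<tau>) * y powr (- \<alpha> - 1) = - (y powr (1 - \<alpha>)) + 3 * h * y powr (- \<alpha>) - 2 * h\<^sup>2 * y powr (- \<alpha> - 1)" .
      have n1: "2 - \<alpha> \<noteq> 0" "1 - \<alpha> \<noteq> 0" "\<alpha> \<noteq> 0" using al by auto
      have dd: "- (2 - \<alpha>) * y powr ((2 - \<alpha>) - 1) / (2 - \<alpha>)
         - 3 * h * (- (1 - \<alpha>) * y powr ((1 - \<alpha>) - 1)) / (1 - \<alpha>)
         - 2 * h\<^sup>2 * (- (- \<alpha>) * y powr (- \<alpha> - 1)) / \<alpha> = - (y powr (1 - \<alpha>)) + 3 * h * y powr (- \<alpha>) - 2 * h\<^sup>2 * y powr (- \<alpha> - 1)"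
      proof -
        have t1: "- (2 - \<alpha>) * X / (2 - \<alpha>) = - X" for X using n1 by (simp add: field_simps)
        have t2: "3 * h * (- (1 - \<alpha>) * X) / (1 - \<alpha>) = - (3 * h * X)" for X using n1 by (simp add: field_simps)
        have t3: "2 * h\<^sup>2 * (- (- \<alpha>) * X) / \<alpha> = 2 * h\<^sup>2 * X" for X using n1 by (simp add: field_simps)
        show ?thesis by (simp only: t1 t2 t3) simp
      qed
      show ?thesis using ch dd by (simp only: y_def)
    qed
    ultimately show "(F has_vector_derivative (\<tau> - (c - 2 * h)) * ((c - h) - \<tau>) * (c - \<tau>) powr (- \<alpha> - 1)) (at \<tau> within {c - 2 * h .. c - h})"
      by (simp add: has_real_derivative_iff_has_vector_derivative[symmetric] has_field_derivative_at_within)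
  qed (use h in auto)
  moreover have "F (c - h) - F (c - 2 * h) = h powr (2 - \<alpha>) * ((1 - 4 * 2 powr (- \<alpha>)) / (2 - \<alpha>) - 3 * (1 - 2 * 2 powr (- \<alpha>)) / (1 - \<alpha>)
              - 2 * (1 - 2 powr (- \<alpha>)) / \<alpha>)"
  proof -
    define P where "P = h powr (2 - \<alpha>)"
    define t where "t = 2 powr (- \<alpha>)"
    have a1: "h * h powr (1 - \<alpha>) = P" using powr_mult_self[OF h, of "2 - \<alpha>"] by (simp add: P_def)
    have a2: "h * h powr (- \<alpha>) = h powr (1 - \<alpha>)" using powr_mult_self[OF h, of "1 - \<alpha>"] by simp
    have a3: "h\<^sup>2 * h powr (- \<alpha>) = P" using a1 a2 by (simp add: power2_eq_square mult.assoc)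
    have b2: "2 * 2 powr (- \<alpha>) = (2::real) powr (1 - \<alpha>)" using powr_mult_self[of 2 "1 - \<alpha>"] by simp
    have b1: "2 * 2 powr (1 - \<alpha>) = (2::real) powr (2 - \<alpha>)" using powr_mult_self[of 2 "2 - \<alpha>"] by simp
    have c1: "(2 * h) powr (2 - \<alpha>) = 4 * t * P"
      using b1 b2 h by (simp add: powr_mult P_def t_def)
    have c2: "h * (2 * h) powr (1 - \<alpha>) = 2 * t * P"
      using b2 a1 h by (simp add: powr_mult t_def mult_ac)
    have c3: "h\<^sup>2 * (2 * h) powr (- \<alpha>) = t * P"
      using a3 h by (simp add: powr_mult t_def mult_ac)
    have d1: "F (c - h) = P / (2 - \<alpha>) - 3 * P / (1 - \<alpha>) - 2 * P / \<alpha>"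
      using a1 a3 by (simp add: F_def P_def mult.assoc)
    have d2: "F (c - 2 * h) = 4 * t * P / (2 - \<alpha>) - 3 * (2 * t * P) / (1 - \<alpha>) - 2 * (t * P) / \<alpha>"
      using c1 c2 c3 by (simp add: F_def mult.assoc)
    have n1: "2 - \<alpha> \<noteq> 0" "1 - \<alpha> \<noteq> 0" "\<alpha> \<noteq> 0" using al by auto
    have "F (c - h) - F (c - 2 * h) = P * ((1 - 4 * t) / (2 - \<alpha>) - 3 * (1 - 2 * t) / (1 - \<alpha>) - 2 * (1 - t) / \<alpha>)"
      unfolding d1 d2 using n1 by (simp add: divide_simps) (simp add: algebra_simps)
    then show ?thesis by (simp add: P_def t_def)
  qed
  ultimately show ?thesis by simp
qed

lemma kstep:
  fixes k \<alpha> :: real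
  assumes k: "2 \<le> k" and al: "0 < \<alpha>"
  shows "\<alpha> * k powr (- \<alpha> - 1) \<le> (k - 1) powr (- \<alpha>) - k powr (- \<alpha>)"
proof -
  have "DERIV (\<lambda>y. y powr (- \<alpha>)) x :> (- \<alpha> * x powr (- \<alpha> - 1))" if "k - 1 \<le> x" "x \<le> k" for x
    using k that by (auto intro!: derivative_eq_intros)
  from MVT2[of "k - 1" k, OF _ this] obtain z where z: "k - 1 < z" "z < k"
    "k powr (- \<alpha>) - (k - 1) powr (- \<alpha>) = (k - (k - 1)) * (- \<alpha> * z powr (- \<alpha> - 1))" by auto
  have "k powr (- \<alpha> - 1) \<le> z powr (- \<alpha> - 1)"
    using z k al by (intro powr_mono2') auto
  then have "\<alpha> * k powr (- \<alpha> - 1) \<le> \<alpha> * z powr (- \<alpha> - 1)" using al by (simp add: mult_left_mono)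
  then show ?thesis using z(3) by simp
qed

lemma tail_sum:
  fixes \<alpha> :: real and n :: nat
  assumes al: "0 < \<alpha>"
  shows "\<alpha> * (\<Sum>l = 1..n - 2. real (n - l) powr (- \<alpha> - 1)) \<le> 1"
proof -
  define F where "F l = real (n - l) powr (- \<alpha>)" for l
  have F01: "0 \<le> F l \<and> F l \<le> 1" for l
  proof (cases "n - l = 0")
    case True then show ?thesis by (simp add: F_def)
  next
    case False
    then have "1 \<le> real (n - l)" by simp
    then show ?thesis unfolding F_def using al
      by (metis powr_ge_zero powr_mono2' powr_one_eq_one neg_le_0_iff_le less_imp_le zero_less_one)
  qed
  have "\<alpha> * (\<Sum>l = 1..n - 2. real (n - l) powr (- \<alpha> - 1)) = (\<Sum>l = 1..n - 2. \<alpha> * real (n - l) powr (- \<alpha> - 1))"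
    by (simp add: sum_distrib_left)
  also have "\<dots> \<le> (\<Sum>l = 1..n - 2. F (Suc l) - F l)"
  proof (rule sum_mono)
    fix l assume l: "l \<in> {1..n - 2}"
    then have "2 \<le> real (n - l)" by auto
    moreover have "real (n - Suc l) = real (n - l) - 1" using l by auto
    ultimately show "\<alpha> * real (n - l) powr (- \<alpha> - 1) \<le> F (Suc l) - F l"
      unfolding F_def using kstep[of "real (n - l)" \<alpha>] al by (simp only:)
  qed
  also have "\<dots> = F (Suc (n - 2)) - F 1" by (rule sum_Suc_diff) simp
  also have "\<dots> \<le> 1" using F01[of "Suc (n - 2)"] F01[of 1] by linarith
  finally show ?thesis .
qed

lemma split_sum:
  fixes f :: "real \<Rightarrow> real" and v :: "nat \<Rightarrow> real" and h :: real and m :: nat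
  assumes h: "0 \<le> h"
    and pieces: "\<And>l. 1 \<le> l \<Longrightarrow> l \<le> m \<Longrightarrow> (f has_integral v l) {real (l - 1) * h .. real l * h}"
  shows "(f has_integral (\<Sum>l = 1..m. v l)) {0 .. real m * h}"
  using pieces
proof (induction m)
  case 0
  then show ?case using has_integral_refl(1)[of f 0] by simp
next
  case (Suc m)
  have IH: "(f has_integral (\<Sum>l = 1..m. v l)) {0 .. real m * h}"
    using Suc.IH Suc.prems by auto
  have last: "(f has_integral v (Suc m)) {real m * h .. real (Suc m) * h}"
    using Suc.prems[of "Suc m"] by simp
  have "(f has_integral ((\<Sum>l = 1..m. v l) + v (Suc m))) {0 .. real (Suc m) * h}"
    by (rule has_integral_combine[OF _ _ IH last]) (use h in \<open>auto intro: mult_right_mono\<close>)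
  then show ?case by simp
qed



lemma aux_fc:
  fixes G f X Y p a :: real
  assumes "G \<noteq> 0" "f = X / (p * ((1 - a) * G)) + (1 / G) * Y"
  shows "G * f = X / (p * (1 - a)) + Y"
proof -
  have "G * f = G * (X / (p * ((1 - a) * G))) + G * (1 / G) * Y" using assms(2) by (simp add: algebra_simps)
  also have "G * (X / (p * ((1 - a) * G))) = X / (p * (1 - a))" using assms(1) by simp
  also have "G * (1 / G) = 1" using assms(1) by simp
  finally show ?thesis by simp
qed

lemma conv_bound:
  fixes x y p q K :: real
  assumes "0 \<le> p" "0 \<le> q" "p + q = 1" "\<bar>x\<bar> \<le> K" "\<bar>y\<bar> \<le> K"
  shows "\<bar>x * p + y * q\<bar> \<le> K"
proof -
  have "\<bar>x * p + y * q\<bar> \<le> \<bar>x\<bar> * p + \<bar>y\<bar> * q"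
    using assms(1,2) by (metis abs_mult abs_of_nonneg abs_triangle_ineq)
  also have "\<dots> \<le> K * p + K * q" using assms by (intro add_mono mult_right_mono) auto
  also have "\<dots> = K" using assms(3) by (simp add: distrib_left[symmetric])
  finally show ?thesis .
qed

lemma telesc: "(\<Sum>l = 1..(m::nat). W l - W (l - 1)) = W m - (W 0 :: real)"
  by (induction m) auto

lemma Jf_nonneg:
  fixes \<alpha> :: real
  assumes al: "0 < \<alpha>" "\<alpha> < 1"
  shows "0 \<le> (1 - 4 * 2 powr (- \<alpha>)) / (2 - \<alpha>) - 3 * (1 - 2 * 2 powr (- \<alpha>)) / (1 - \<alpha>) - 2 * (1 - 2 powr (- \<alpha>)) / \<alpha>"
proof -
  have "((\<lambda>\<tau>. (\<tau> - (2 - 2 * 1)) * ((2 - 1) - \<tau>) * (2 - \<tau>) powr (- \<alpha> - 1)) has_integral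
           1 powr (2 - \<alpha>) * ((1 - 4 * 2 powr (- \<alpha>)) / (2 - \<alpha>) - 3 * (1 - 2 * 2 powr (- \<alpha>)) / (1 - \<alpha>)
              - 2 * (1 - 2 powr (- \<alpha>)) / \<alpha>)) {2 - 2 * 1 .. 2 - (1::real)}"
    by (rule Q_exact) (use al in auto)
  then have "0 \<le> 1 powr (2 - \<alpha>) * ((1 - 4 * 2 powr (- \<alpha>)) / (2 - \<alpha>) - 3 * (1 - 2 * 2 powr (- \<alpha>)) / (1 - \<alpha>)
              - 2 * (1 - 2 powr (- \<alpha>)) / \<alpha>)"
    by (rule has_integral_nonneg) auto
  then show ?thesis by simp
qed

lemma const_id:
  fixes \<alpha> :: real
  assumes al: "0 < \<alpha>" "\<alpha> < 1"
  shows "\<alpha> / (2 * (1 - \<alpha>) * (2 - \<alpha>))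
       + \<alpha> / 2 * ((1 - 4 * 2 powr (- \<alpha>)) / (2 - \<alpha>) - 3 * (1 - 2 * 2 powr (- \<alpha>)) / (1 - \<alpha>) - 2 * (1 - 2 powr (- \<alpha>)) / \<alpha>)
       + 1 / 12
     = ((1 - \<alpha>) / 12 + 2 powr (2 - \<alpha>) / (2 - \<alpha>) - (1 + 2 powr (- \<alpha>))) / (1 - \<alpha>)"
proof -
  define t where "t = (2::real) powr (- \<alpha>)"
  have b2: "2 * 2 powr (- \<alpha>) = (2::real) powr (1 - \<alpha>)" using powr_mult_self[of 2 "1 - \<alpha>"] by simp
  have b1: "2 * 2 powr (1 - \<alpha>) = (2::real) powr (2 - \<alpha>)" using powr_mult_self[of 2 "2 - \<alpha>"] by simp
  have p4: "(2::real) powr (2 - \<alpha>) = 4 * t" using b1 b2 by (simp add: t_def)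
  have n1: "2 - \<alpha> \<noteq> 0" "1 - \<alpha> \<noteq> 0" "\<alpha> \<noteq> 0" using al by auto
  show ?thesis unfolding p4 t_def[symmetric] using n1
    by (simp add: divide_simps) (simp add: algebra_simps)
qed

theorem lemma2p7:
  fixes \<alpha> T \<epsilon> :: real and NT Nexp n :: nat
    and s \<omega> :: "nat \<Rightarrow> real" and u du ddu :: "real \<Rightarrow> real"
  assumes "0 < \<alpha>" "\<alpha> < 1" "0 < T" "0 < NT" "0 < \<epsilon>"
    and "\<forall>i\<in>{1..Nexp}. 0 < s i \<and> 0 < \<omega> i"
    and "\<forall>t\<in>{T / real NT .. T}.
           \<bar>t powr (- 1 - \<alpha>) - (\<Sum>i = 1..Nexp. \<omega> i * exp (- s i * t))\<bar> \<le> \<epsilon>"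
    and "1 \<le> n" "n \<le> NT"
    and "\<forall>x\<in>{0 .. real n * (T / real NT)}.
           (u has_real_derivative du x) (at x within {0 .. real n * (T / real NT)})"
    and "\<forall>x\<in>{0 .. real n * (T / real NT)}.
           (du has_real_derivative ddu x) (at x within {0 .. real n * (T / real NT)})"
    and "continuous_on {0 .. real n * (T / real NT)} ddu"
  shows "\<bar>caputo \<alpha> du (real n * (T / real NT))
           - fast_caputo \<alpha> (T / real NT) Nexp s \<omega> (\<lambda>k. u (real k * (T / real NT))) n\<bar>
         \<le> (T / real NT) powr (2 - \<alpha>) / Gamma (2 - \<alpha>)
             * ((1 - \<alpha>) / 12 + 2 powr (2 - \<alpha>) / (2 - \<alpha>) - (1 + 2 powr (- \<alpha>)))
             * (SUP t\<in>{0 .. real n * (T / real NT)}. \<bar>ddu t\<bar>)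
           + \<alpha> * \<epsilon> * (real (n - 1) * (T / real NT)) / Gamma (1 - \<alpha>)
             * (SUP t\<in>{0 .. real (n - 1) * (T / real NT)}. \<bar>u t\<bar>)"
proof -
  note al = assms(1,2)
  define h where "h = T / real NT"
  define tn where "tn = real n * h"
  define uv where "uv = (\<lambda>k. u (real k * h))"
  define M where "M = (SUP t\<in>{0 .. tn}. \<bar>ddu t\<bar>)"
  define K where "K = (SUP t\<in>{0 .. real (n - 1) * h}. \<bar>u t\<bar>)"
  define E where "E \<tau> = (\<Sum>i = 1..Nexp. \<omega> i * exp (- s i * (tn - \<tau>)))" for \<tau>
  define Jf where "Jf = (1 - 4 * 2 powr (- \<alpha>)) / (2 - \<alpha>) - 3 * (1 - 2 * 2 powr (- \<alpha>)) / (1 - \<alpha>) - 2 * (1 - 2 powr (- \<alpha>)) / \<alpha>"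
  have h0: "0 < h" using assms(3,4) by (simp add: h_def)
  have hT: "real NT * h = T" using assms(4) by (simp add: h_def)
  have tnT: "tn \<le> T" using assms(9) h0 hT unfolding tn_def by (metis mult_right_mono of_nat_le_iff less_imp_le)
  have tn0: "0 < tn" using assms(8) h0 by (simp add: tn_def)
  have d1g: "\<And>x. x \<in> {0..tn} \<Longrightarrow> (u has_real_derivative du x) (at x within {0..tn})"
    using assms(10) by (simp add: tn_def h_def)
  have d2g: "\<And>x. x \<in> {0..tn} \<Longrightarrow> (du has_real_derivative ddu x) (at x within {0..tn})"
    using assms(11) by (simp add: tn_def h_def)
  have cddu: "continuous_on {0..tn} ddu" using assms(12) by (simp add: tn_def h_def)
  have cu: "continuous_on {0..tn} u" using d1g by (rule DERIV_continuous_on)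
  have bddM: "bdd_above ((\<lambda>t. \<bar>ddu t\<bar>) ` {0..tn})"
    by (intro bounded_imp_bdd_above compact_imp_bounded compact_continuous_image continuous_intros cddu compact_Icc)
  have Mb: "\<bar>ddu t\<bar> \<le> M" if "t \<in> {0..tn}" for t
    unfolding M_def by (rule cSUP_upper[OF that bddM])
  have M0: "0 \<le> M" using Mb[of 0] tn0 by auto
  have cuK: "continuous_on {0..real (n - 1) * h} u"
    by (rule continuous_on_subset[OF cu]) (use h0 in \<open>auto simp: tn_def intro!: mult_right_mono\<close>)
  have bddK: "bdd_above ((\<lambda>t. \<bar>u t\<bar>) ` {0..real (n - 1) * h})"
    by (intro bounded_imp_bdd_above compact_imp_bounded compact_continuous_image continuous_intros cuK compact_Icc)
  have Kb: "\<bar>u t\<bar> \<le> K" if "t \<in> {0..real (n - 1) * h}" for t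
    unfolding K_def by (rule cSUP_upper[OF that bddK])
  have K0: "0 \<le> K" using Kb[of 0] h0 by auto
  have uvK: "\<bar>uv k\<bar> \<le> K" if "k \<le> n - 1" for k
    unfolding uv_def using that h0 by (intro Kb) (auto intro!: mult_right_mono)
  have sub: "{real (l - 1) * h .. real l * h} \<subseteq> {0..tn}" if "l \<le> n" for l
    using that h0 by (auto simp: tn_def intro: order_trans[OF _ mult_right_mono[of "real l" "real n" h]])
  have len: "real l * h - real (l - 1) * h = h" if "1 \<le> l" for l
    using that by (simp add: of_nat_diff algebra_simps)
  have d1l: "(u has_real_derivative du y) (at y within {real (l - 1) * h .. real l * h})"
    if "l \<le> n" "y \<in> {real (l - 1) * h .. real l * h}" for l y
    using DERIV_subset[OF d1g sub[OF that(1)]] that sub by blast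
  have d2l: "(du has_real_derivative ddu y) (at y within {real (l - 1) * h .. real l * h})"
    if "l \<le> n" "y \<in> {real (l - 1) * h .. real l * h}" for l y
    using DERIV_subset[OF d2g sub[OF that(1)]] that sub by blast
  have Ml: "\<bar>ddu y\<bar> \<le> M" if "l \<le> n" "y \<in> {real (l - 1) * h .. real l * h}" for l y
    using Mb sub that by blast
  have ab: "real (n - 1) * h < tn" using len[OF assms(8)] h0 unfolding tn_def by linarith
  obtain R where hR0: "((\<lambda>\<tau>. du \<tau> * (tn - \<tau>) powr (- \<alpha>)) has_integral
              ((u tn - u (real (n - 1) * h)) / (tn - real (n - 1) * h) * ((tn - real (n - 1) * h) powr (1 - \<alpha>) / (1 - \<alpha>)) + R)) {real (n - 1) * h..tn}"
      and Rb0: "\<bar>R\<bar> \<le> \<alpha> * M / 2 * ((tn - real (n - 1) * h) powr (2 - \<alpha>) / ((1 - \<alpha>) * (2 - \<alpha>)))"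
    using last_interval[OF ab al, of u du ddu M] d1l[of n] d2l[of n] Ml[of n] unfolding tn_def by auto
  have tnh: "tn - real (n - 1) * h = h" using len[OF assms(8)] by (simp add: tn_def)
  have hR: "((\<lambda>\<tau>. du \<tau> * (tn - \<tau>) powr (- \<alpha>)) has_integral
              ((uv n - uv (n - 1)) / h * (h powr (1 - \<alpha>) / (1 - \<alpha>)) + R)) {real (n - 1) * h..real n * h}"
    using hR0 unfolding tnh by (simp add: uv_def tn_def)
  have Rb: "\<bar>R\<bar> \<le> \<alpha> * M / 2 * (h powr (2 - \<alpha>) / ((1 - \<alpha>) * (2 - \<alpha>)))"
    using Rb0 unfolding tnh .
  define A where "A l = integral {real (l - 1) * h..real l * h} (\<lambda>\<tau>. u \<tau> * (tn - \<tau>) powr (- \<alpha> - 1))" for l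
  define W where "W k = uv k * (tn - real k * h) powr (- \<alpha>)" for k
  define v where "v l = (if l = n then (uv n - uv (n - 1)) / h * (h powr (1 - \<alpha>) / (1 - \<alpha>)) + R
                         else W l - W (l - 1) - \<alpha> * A l)" for l
  have hv: "((\<lambda>\<tau>. du \<tau> * (tn - \<tau>) powr (- \<alpha>)) has_integral v l) {real (l - 1) * h..real l * h}"
    if l: "1 \<le> l" "l \<le> n" for l
  proof (cases "l = n")
    case True
    then show ?thesis using hR by (simp add: v_def)
  next
    case False
    with l have ln: "l < n" by auto
    have a1: "real (l - 1) * h < real l * h" using len[OF l(1)] h0 by linarith
    have a2: "real l * h < tn" using ln h0 by (simp add: tn_def)
    have "((\<lambda>\<tau>. du \<tau> * (tn - \<tau>) powr (- \<alpha>)) has_integral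
           (u (real l * h) * (tn - real l * h) powr (- \<alpha>) - u (real (l - 1) * h) * (tn - real (l - 1) * h) powr (- \<alpha>)
            - \<alpha> * integral {real (l - 1) * h..real l * h} (\<lambda>\<tau>. u \<tau> * (tn - \<tau>) powr (- \<alpha> - 1)))) {real (l - 1) * h..real l * h}"
      by (rule mid_interval[OF a1 a2]) (rule d1l[OF l(2)])
    then show ?thesis using False by (simp add: v_def W_def A_def uv_def)
  qed
  have hI: "((\<lambda>\<tau>. du \<tau> * (tn - \<tau>) powr (- \<alpha>)) has_integral (\<Sum>l = 1..n. v l)) {0..tn}"
    using split_sum[OF less_imp_le[OF h0] hv] by (simp add: tn_def)
  have G1: "0 < Gamma (1 - \<alpha>)" using al by simp
  have cap: "caputo \<alpha> du tn = (\<Sum>l = 1..n. v l) / Gamma (1 - \<alpha>)"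
  proof -
    have "integral {0..tn} (\<lambda>\<tau>. du \<tau> / (tn - \<tau>) powr \<alpha>) = integral {0..tn} (\<lambda>\<tau>. du \<tau> * (tn - \<tau>) powr (- \<alpha>))"
      by (rule integral_cong) (simp add: powr_minus_divide divide_inverse)
    also have "\<dots> = (\<Sum>l = 1..n. v l)" using hI by (rule integral_unique)
    finally show ?thesis by (simp add: caputo_def)
  qed
  define C where "C l = integral {real (l - 1) * h..real l * h} (\<lambda>\<tau>. Pi1 h uv l \<tau> * E \<tau>)" for l
  define B where "B l = integral {real (l - 1) * h..real l * h} (\<lambda>\<tau>. Pi1 h uv l \<tau> * (tn - \<tau>) powr (- \<alpha> - 1))" for l
  define S where "S l = integral {real (l - 1) * h..real l * h} (\<lambda>\<tau>. (u \<tau> - Pi1 h uv l \<tau>) * (tn - \<tau>) powr (- \<alpha> - 1))" for l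
  define Hk where "Hk l = integral {real (l - 1) * h..real l * h} (\<lambda>\<tau>. Pi1 h uv l \<tau> * ((tn - \<tau>) powr (- \<alpha> - 1) - E \<tau>))" for l
  have pos: "0 < tn - \<tau>" if "l \<in> {1..n - 1}" "\<tau> \<in> {real (l - 1) * h..real l * h}" for l \<tau>
  proof -
    have "real l \<le> real n - 1" using that(1) by auto
    then have "real l * h \<le> (real n - 1) * h" using h0 by (intro mult_right_mono) auto
    then show ?thesis using that(2) h0 by (simp add: tn_def algebra_simps)
  qed
  have cul: "continuous_on {real (l - 1) * h..real l * h} u" if "l \<in> {1..n - 1}" for l
    by (rule continuous_on_subset[OF cu sub]) (use that in auto)
  have cpl: "continuous_on {real (l - 1) * h..real l * h} (\<lambda>\<tau>. (tn - \<tau>) powr (- \<alpha> - 1))" if "l \<in> {1..n - 1}" for l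
    by (intro continuous_intros) (use pos[OF that] in force)
  have cPl: "continuous_on {real (l - 1) * h..real l * h} (Pi1 h uv l)" for l
    unfolding Pi1_def using h0 by (intro continuous_intros) auto
  have cEl: "continuous_on {real (l - 1) * h..real l * h} E" for l
    unfolding E_def by (intro continuous_intros)
  have iA: "(\<lambda>\<tau>. u \<tau> * (tn - \<tau>) powr (- \<alpha> - 1)) integrable_on {real (l - 1) * h..real l * h}"
    and iB: "(\<lambda>\<tau>. Pi1 h uv l \<tau> * (tn - \<tau>) powr (- \<alpha> - 1)) integrable_on {real (l - 1) * h..real l * h}"
    and iS: "(\<lambda>\<tau>. (u \<tau> - Pi1 h uv l \<tau>) * (tn - \<tau>) powr (- \<alpha> - 1)) integrable_on {real (l - 1) * h..real l * h}"
    and iC: "(\<lambda>\<tau>. Pi1 h uv l \<tau> * E \<tau>) integrable_on {real (l - 1) * h..real l * h}"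
    and iH: "(\<lambda>\<tau>. Pi1 h uv l \<tau> * ((tn - \<tau>) powr (- \<alpha> - 1) - E \<tau>)) integrable_on {real (l - 1) * h..real l * h}"
    if "l \<in> {1..n - 1}" for l
    using cul[OF that] cpl[OF that] cPl[of l] cEl[of l]
    by (auto intro!: integrable_continuous_interval continuous_on_mult continuous_on_diff)
  have iU: "(\<lambda>\<tau>. exp (- s i * (tn - \<tau>)) * Pi1 h uv l \<tau>) integrable_on {real (l - 1) * h..real l * h}" for i l
    using cPl[of l] by (auto intro!: integrable_continuous_interval continuous_intros)
  have sumU: "(\<Sum>i = 1..Nexp. \<omega> i * Uhist h uv (s i) n) = (\<Sum>l = 1..n - 1. C l)"
  proof -
    have "(\<Sum>i = 1..Nexp. \<omega> i * Uhist h uv (s i) n) = (\<Sum>i = 1..Nexp. \<Sum>l = 1..n - 1. \<omega> i *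
            integral {real (l - 1) * h..real l * h} (\<lambda>\<tau>. exp (- s i * (tn - \<tau>)) * Pi1 h uv l \<tau>))"
      by (simp only: Uhist_def tn_def[symmetric] sum_distrib_left)
    also have "\<dots> = (\<Sum>l = 1..n - 1. \<Sum>i = 1..Nexp. \<omega> i *
            integral {real (l - 1) * h..real l * h} (\<lambda>\<tau>. exp (- s i * (tn - \<tau>)) * Pi1 h uv l \<tau>))"
      by (rule sum.swap)
    also have "\<dots> = (\<Sum>l = 1..n - 1. C l)"
    proof (rule sum.cong[OF refl])
      fix l assume l: "l \<in> {1..n - 1}"
      have "(\<Sum>i = 1..Nexp. \<omega> i * integral {real (l - 1) * h..real l * h} (\<lambda>\<tau>. exp (- s i * (tn - \<tau>)) * Pi1 h uv l \<tau>))
          = (\<Sum>i = 1..Nexp. integral {real (l - 1) * h..real l * h} (\<lambda>\<tau>. \<omega> i * (exp (- s i * (tn - \<tau>)) * Pi1 h uv l \<tau>)))"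
        by simp
      also have "\<dots> = integral {real (l - 1) * h..real l * h} (\<lambda>\<tau>. \<Sum>i = 1..Nexp. \<omega> i * (exp (- s i * (tn - \<tau>)) * Pi1 h uv l \<tau>))"
        by (rule integral_sum[symmetric]) (use cPl in \<open>auto intro!: integrable_continuous_interval continuous_intros\<close>)
      also have "\<dots> = C l"
        unfolding C_def E_def by (rule integral_cong) (simp add: sum_distrib_left sum_distrib_right mult_ac)
      finally show "(\<Sum>i = 1..Nexp. \<omega> i * integral {real (l - 1) * h..real l * h} (\<lambda>\<tau>. exp (- s i * (tn - \<tau>)) * Pi1 h uv l \<tau>)) = C l" .
    qed
    finally show ?thesis .
  qed
  have G2: "Gamma (2 - \<alpha>) = (1 - \<alpha>) * Gamma (1 - \<alpha>)"
  proof -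
    have "1 - \<alpha> \<notin> \<int>\<^sub>\<le>\<^sub>0" using al by (auto dest: nonpos_Ints_nonpos)
    then have "Gamma ((1 - \<alpha>) + 1) = (1 - \<alpha>) * Gamma (1 - \<alpha>)" by (rule Gamma_plus1)
    then show ?thesis by (simp add: algebra_simps)
  qed
  have hpa: "0 < h powr \<alpha>" using h0 by simp
  have fc: "Gamma (1 - \<alpha>) * fast_caputo \<alpha> h Nexp s \<omega> uv n
      = (uv n - uv (n - 1)) / (h powr \<alpha> * (1 - \<alpha>)) + uv (n - 1) / h powr \<alpha> - uv 0 / tn powr \<alpha> - \<alpha> * (\<Sum>l = 1..n - 1. C l)"
  proof -
    have "fast_caputo \<alpha> h Nexp s \<omega> uv n = (uv n - uv (n - 1)) / (h powr \<alpha> * ((1 - \<alpha>) * Gamma (1 - \<alpha>)))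
       + (1 / Gamma (1 - \<alpha>)) * (uv (n - 1) / h powr \<alpha> - uv 0 / tn powr \<alpha> - \<alpha> * (\<Sum>l = 1..n - 1. C l))"
      unfolding fast_caputo_def sumU G2 by (simp add: tn_def)
    from aux_fc[OF _ this] G1 show ?thesis by linarith
  qed
  have sumv: "(\<Sum>l = 1..n. v l) = W (n - 1) - W 0 - \<alpha> * (\<Sum>l = 1..n - 1. A l) + v n"
  proof -
    have ins: "{1..n} = insert n {1..n - 1}" using assms(8) by auto
    have "(\<Sum>l = 1..n. v l) = (\<Sum>l = 1..n - 1. v l) + v n"
      unfolding ins using assms(8) by (subst sum.insert) auto
    also have "(\<Sum>l = 1..n - 1. v l) = (\<Sum>l = 1..n - 1. (W l - W (l - 1)) - \<alpha> * A l)"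
      by (rule sum.cong) (auto simp: v_def)
    also have "\<dots> = (\<Sum>l = 1..n - 1. W l - W (l - 1)) - \<alpha> * (\<Sum>l = 1..n - 1. A l)"
      by (simp add: sum_subtractf sum_distrib_left)
    also have "(\<Sum>l = 1..n - 1. W l - W (l - 1)) = W (n - 1) - W 0" by (rule telesc)
    finally show ?thesis .
  qed
  have AS: "A l = S l + B l" if "l \<in> {1..n - 1}" for l
  proof -
    have "S l + B l = integral {real (l - 1) * h..real l * h}
            (\<lambda>\<tau>. (u \<tau> - Pi1 h uv l \<tau>) * (tn - \<tau>) powr (- \<alpha> - 1) + Pi1 h uv l \<tau> * (tn - \<tau>) powr (- \<alpha> - 1))"
      unfolding S_def B_def by (rule integral_add[symmetric, OF iS[OF that] iB[OF that]])
    also have "\<dots> = A l" unfolding A_def by (rule integral_cong) (simp add: algebra_simps)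
    finally show ?thesis by simp
  qed
  have CB: "C l = B l - Hk l" if "l \<in> {1..n - 1}" for l
  proof -
    have "B l - Hk l = integral {real (l - 1) * h..real l * h}
            (\<lambda>\<tau>. Pi1 h uv l \<tau> * (tn - \<tau>) powr (- \<alpha> - 1) - Pi1 h uv l \<tau> * ((tn - \<tau>) powr (- \<alpha> - 1) - E \<tau>))"
      unfolding Hk_def B_def by (rule integral_diff[symmetric, OF iB[OF that] iH[OF that]])
    also have "\<dots> = C l" unfolding C_def by (rule integral_cong) (simp add: algebra_simps)
    finally show ?thesis by simp
  qed
  have sA: "\<alpha> * (\<Sum>l = 1..n - 1. A l) = \<alpha> * (\<Sum>l = 1..n - 1. S l) + \<alpha> * (\<Sum>l = 1..n - 1. B l)"
  proof -
    have "(\<Sum>l = 1..n - 1. A l) = (\<Sum>l = 1..n - 1. S l + B l)" by (rule sum.cong) (auto simp: AS)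
    then show ?thesis by (simp add: sum.distrib distrib_left)
  qed
  have sC: "\<alpha> * (\<Sum>l = 1..n - 1. C l) = \<alpha> * (\<Sum>l = 1..n - 1. B l) - \<alpha> * (\<Sum>l = 1..n - 1. Hk l)"
  proof -
    have "(\<Sum>l = 1..n - 1. C l) = (\<Sum>l = 1..n - 1. B l - Hk l)" by (rule sum.cong) (auto simp: CB)
    then show ?thesis by (simp add: sum_subtractf right_diff_distrib)
  qed
  have Wn1: "W (n - 1) = uv (n - 1) / h powr \<alpha>" unfolding W_def tnh by (simp add: powr_minus_divide)
  have W0: "W 0 = uv 0 / tn powr \<alpha>" by (simp add: W_def powr_minus_divide)
  have hp1: "h powr (1 - \<alpha>) = h / h powr \<alpha>"
    using powr_mult_self[OF h0, of "1 - \<alpha>"] by (simp add: powr_minus_divide)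
  have vn: "v n = (uv n - uv (n - 1)) / (h powr \<alpha> * (1 - \<alpha>)) + R"
    using h0 by (simp add: v_def hp1)
  have capv: "Gamma (1 - \<alpha>) * caputo \<alpha> du tn = (\<Sum>l = 1..n. v l)" using G1 by (simp add: cap)
  have key: "Gamma (1 - \<alpha>) * (caputo \<alpha> du tn - fast_caputo \<alpha> h Nexp s \<omega> uv n)
      = R - \<alpha> * (\<Sum>l = 1..n - 1. S l) - \<alpha> * (\<Sum>l = 1..n - 1. Hk l)"
  proof -
    have "Gamma (1 - \<alpha>) * (caputo \<alpha> du tn - fast_caputo \<alpha> h Nexp s \<omega> uv n)
        = Gamma (1 - \<alpha>) * caputo \<alpha> du tn - Gamma (1 - \<alpha>) * fast_caputo \<alpha> h Nexp s \<omega> uv n"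
      by (rule right_diff_distrib)
    then show ?thesis using capv fc sumv sA sC Wn1 W0 vn by linarith
  qed
  define Q where "Q l = integral {real (l - 1) * h..real l * h} (\<lambda>\<tau>. (\<tau> - real (l - 1) * h) * (real l * h - \<tau>) * (tn - \<tau>) powr (- \<alpha> - 1))" for l
  have lt_tn: "real l * h < tn" if "l \<in> {1..n - 1}" for l
    using pos[OF that, of "real l * h"] len[of l] that h0 by auto
  have hS: "\<bar>S l\<bar> \<le> M / 2 * Q l" if l: "l \<in> {1..n - 1}" for l
  proof -
    have l1: "1 \<le> l" and ln: "l \<le> n" using l by auto
    have a1: "real (l - 1) * h < real l * h" using len[OF l1] h0 by linarith
    have ip: "Pi1 h uv l y = (u (real (l - 1) * h) * (real l * h - y) + u (real l * h) * (y - real (l - 1) * h)) / (real l * h - real (l - 1) * h)" for y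
      unfolding len[OF l1] by (simp add: Pi1_def uv_def add_divide_distrib)
    show ?thesis
      unfolding S_def Q_def
      by (rule S_bound(1)[OF a1 lt_tn[OF l] d1l[OF ln] d2l[OF ln] Ml[OF ln] ip])
  qed
  have em: "- 1 - \<alpha> = - \<alpha> - 1" by simp
  have hH: "\<bar>Hk l\<bar> \<le> h * (\<epsilon> * K)" if l: "l \<in> {1..n - 1}" for l
  proof -
    have l1: "1 \<le> l" and ln: "l \<le> n - 1" using l by auto
    have pw: "\<bar>Pi1 h uv l \<tau> * ((tn - \<tau>) powr (- \<alpha> - 1) - E \<tau>)\<bar> \<le> K * \<epsilon>"
      if t: "\<tau> \<in> {real (l - 1) * h..real l * h}" for \<tau>
    proof -
      have "Pi1 h uv l \<tau> = uv (l - 1) * ((real l * h - \<tau>) / h) + uv l * ((\<tau> - real (l - 1) * h) / h)"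
        by (simp add: Pi1_def)
      moreover have "\<bar>uv (l - 1) * ((real l * h - \<tau>) / h) + uv l * ((\<tau> - real (l - 1) * h) / h)\<bar> \<le> K"
      proof (rule conv_bound)
        show "0 \<le> (real l * h - \<tau>) / h" "0 \<le> (\<tau> - real (l - 1) * h) / h" using t h0 by auto
        show "(real l * h - \<tau>) / h + (\<tau> - real (l - 1) * h) / h = 1"
          using len[OF l1] h0 by (simp add: add_divide_distrib[symmetric])
        show "\<bar>uv (l - 1)\<bar> \<le> K" "\<bar>uv l\<bar> \<le> K" using uvK ln by auto
      qed
      ultimately have P: "\<bar>Pi1 h uv l \<tau>\<bar> \<le> K" by simp
      have t1: "h \<le> tn - \<tau>"
      proof -
        have "real l \<le> real n - 1" using ln l1 by linarith
        then have "real l * h \<le> (real n - 1) * h" using h0 by (intro mult_right_mono) auto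
        then show ?thesis using t by (simp add: tn_def algebra_simps)
      qed
      have t2: "tn - \<tau> \<le> T"
      proof -
        have "0 \<le> real (l - 1) * h" using h0 by simp
        then show ?thesis using t tnT by auto
      qed
      have "tn - \<tau> \<in> {T / real NT .. T}" using t1 t2 by (simp add: h_def)
      then have "\<bar>(tn - \<tau>) powr (- 1 - \<alpha>) - (\<Sum>i = 1..Nexp. \<omega> i * exp (- s i * (tn - \<tau>)))\<bar> \<le> \<epsilon>"
        using assms(7) by blast
      then have Eb: "\<bar>(tn - \<tau>) powr (- \<alpha> - 1) - E \<tau>\<bar> \<le> \<epsilon>" by (simp only: em E_def)
      show ?thesis unfolding abs_mult by (rule mult_mono[OF P Eb K0]) simp
    qed
    have "norm (Hk l) \<le> integral {real (l - 1) * h..real l * h} (\<lambda>\<tau>. K * \<epsilon>)"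
      unfolding Hk_def
      by (rule integral_norm_bound_integral[OF iH[OF l]]) (use pw in auto)
    also have "\<dots> = h * (\<epsilon> * K)" using len[OF l1] h0 by (simp add: content_real)
    finally show ?thesis by simp
  qed
  have Jf0: "0 \<le> Jf" unfolding Jf_def by (rule Jf_nonneg[OF al])
  have hp2: "0 \<le> h powr (2 - \<alpha>)" by simp
  have Qsum: "\<alpha> / 2 * (\<Sum>l = 1..n - 1. Q l) \<le> h powr (2 - \<alpha>) * (\<alpha> / 2 * Jf + 1 / 12)"
  proof (cases "n = 1")
    case True
    then show ?thesis using Jf0 hp2 al by simp
  next
    case False
    then have n2: "2 \<le> n" using assms(8) by auto
    have ins: "{1..n - 1} = insert (n - 1) {1..n - 2}" using n2 by auto
    have sQ: "(\<Sum>l = 1..n - 1. Q l) = Q (n - 1) + (\<Sum>l = 1..n - 2. Q l)"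
      unfolding ins by (subst sum.insert) auto
    have e1: "real (n - 1 - 1) * h = tn - 2 * h" using n2 by (simp add: tn_def of_nat_diff algebra_simps)
    have e2: "real (n - 1) * h = tn - h" using n2 by (simp add: tn_def of_nat_diff algebra_simps)
    have Qn: "Q (n - 1) = h powr (2 - \<alpha>) * Jf"
      unfolding Q_def e1 e2 Jf_def by (rule integral_unique[OF Q_exact[OF h0 al]])
    have h3: "h ^ 3 * h powr (- \<alpha> - 1) = h powr (2 - \<alpha>)"
    proof -
      have "h * h powr (- \<alpha> - 1) = h powr (- \<alpha>)" using powr_mult_self[OF h0, of "- \<alpha>"] by simp
      moreover have "h * h powr (- \<alpha>) = h powr (1 - \<alpha>)" using powr_mult_self[OF h0, of "1 - \<alpha>"] by simp
      moreover have "h * h powr (1 - \<alpha>) = h powr (2 - \<alpha>)" using powr_mult_self[OF h0, of "2 - \<alpha>"] by simp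
      ultimately show ?thesis by (simp add: power3_eq_cube mult.assoc)
    qed
    have Qt: "Q l \<le> h powr (2 - \<alpha>) / 6 * real (n - l) powr (- \<alpha> - 1)" if l: "l \<in> {1..n - 2}" for l
    proof -
      have l1: "1 \<le> l" and ln: "l < n" using l n2 by auto
      have a1: "real (l - 1) * h < real l * h" using len[OF l1] h0 by linarith
      have a2: "real l * h < tn" using ln h0 by (simp add: tn_def)
      have "Q l \<le> (real l * h - real (l - 1) * h) ^ 3 / 6 * (tn - real l * h) powr (- \<alpha> - 1)"
        unfolding Q_def by (rule Q_bound[OF a1 a2 al(1)])
      also have "tn - real l * h = real (n - l) * h" using ln by (simp add: tn_def of_nat_diff algebra_simps)
      also have "(real (n - l) * h) powr (- \<alpha> - 1) = real (n - l) powr (- \<alpha> - 1) * h powr (- \<alpha> - 1)"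
        using h0 by (simp add: powr_mult)
      also have "(real l * h - real (l - 1) * h) ^ 3 / 6 * (real (n - l) powr (- \<alpha> - 1) * h powr (- \<alpha> - 1))
          = (h ^ 3 * h powr (- \<alpha> - 1)) / 6 * real (n - l) powr (- \<alpha> - 1)"
        unfolding len[OF l1] by (simp add: algebra_simps)
      also have "\<dots> = h powr (2 - \<alpha>) / 6 * real (n - l) powr (- \<alpha> - 1)" by (simp only: h3)
      finally show ?thesis .
    qed
    have "(\<Sum>l = 1..n - 2. Q l) \<le> (\<Sum>l = 1..n - 2. h powr (2 - \<alpha>) / 6 * real (n - l) powr (- \<alpha> - 1))"
      by (rule sum_mono) (rule Qt)
    also have "\<dots> = h powr (2 - \<alpha>) / 6 * (\<Sum>l = 1..n - 2. real (n - l) powr (- \<alpha> - 1))"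
      by (simp add: sum_distrib_left)
    finally have st: "\<alpha> / 2 * (\<Sum>l = 1..n - 2. Q l) \<le> h powr (2 - \<alpha>) / 12 * (\<alpha> * (\<Sum>l = 1..n - 2. real (n - l) powr (- \<alpha> - 1)))"
      using al by (simp add: mult_left_mono mult_ac)
    also have "\<dots> \<le> h powr (2 - \<alpha>) / 12 * 1"
      by (rule mult_left_mono[OF tail_sum[OF al(1)]]) simp
    finally have st2: "\<alpha> / 2 * (\<Sum>l = 1..n - 2. Q l) \<le> h powr (2 - \<alpha>) / 12" by simp
    have "\<alpha> / 2 * (\<Sum>l = 1..n - 1. Q l) = \<alpha> / 2 * Q (n - 1) + \<alpha> / 2 * (\<Sum>l = 1..n - 2. Q l)"
      unfolding sQ by (simp add: distrib_left)
    also have "\<dots> \<le> \<alpha> / 2 * (h powr (2 - \<alpha>) * Jf) + h powr (2 - \<alpha>) / 12"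
      using st2 Qn by simp
    also have "\<dots> = h powr (2 - \<alpha>) * (\<alpha> / 2 * Jf + 1 / 12)" by (simp add: algebra_simps)
    finally show ?thesis .
  qed
  define Cc where "Cc = (1 - \<alpha>) / 12 + 2 powr (2 - \<alpha>) / (2 - \<alpha>) - (1 + 2 powr (- \<alpha>))"
  have cid: "\<alpha> / (2 * (1 - \<alpha>) * (2 - \<alpha>)) + \<alpha> / 2 * Jf + 1 / 12 = Cc / (1 - \<alpha>)"
    unfolding Jf_def Cc_def by (rule const_id[OF al])
  have Sabs: "\<bar>\<Sum>l = 1..n - 1. S l\<bar> \<le> M / 2 * (\<Sum>l = 1..n - 1. Q l)"
  proof -
    have "\<bar>\<Sum>l = 1..n - 1. S l\<bar> \<le> (\<Sum>l = 1..n - 1. \<bar>S l\<bar>)" by (rule sum_abs)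
    also have "\<dots> \<le> (\<Sum>l = 1..n - 1. M / 2 * Q l)" by (rule sum_mono) (rule hS)
    also have "\<dots> = M / 2 * (\<Sum>l = 1..n - 1. Q l)" by (simp add: sum_distrib_left)
    finally show ?thesis .
  qed
  have Habs: "\<bar>\<Sum>l = 1..n - 1. Hk l\<bar> \<le> real (n - 1) * (h * (\<epsilon> * K))"
  proof -
    have "\<bar>\<Sum>l = 1..n - 1. Hk l\<bar> \<le> (\<Sum>l = 1..n - 1. \<bar>Hk l\<bar>)" by (rule sum_abs)
    also have "\<dots> \<le> of_nat (card {1..n - 1}) * (h * (\<epsilon> * K))" by (rule sum_bounded_above) (rule hH)
    finally show ?thesis by simp
  qed
  have t1: "\<alpha> * \<bar>\<Sum>l = 1..n - 1. S l\<bar> \<le> M * (h powr (2 - \<alpha>) * (\<alpha> / 2 * Jf + 1 / 12))"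
  proof -
    have "\<alpha> * \<bar>\<Sum>l = 1..n - 1. S l\<bar> \<le> \<alpha> * (M / 2 * (\<Sum>l = 1..n - 1. Q l))"
      using Sabs al by (simp add: mult_left_mono)
    also have "\<dots> = M * (\<alpha> / 2 * (\<Sum>l = 1..n - 1. Q l))" by simp
    also have "\<dots> \<le> M * (h powr (2 - \<alpha>) * (\<alpha> / 2 * Jf + 1 / 12))"
      by (rule mult_left_mono[OF Qsum M0])
    finally show ?thesis .
  qed
  have t2: "\<alpha> * \<bar>\<Sum>l = 1..n - 1. Hk l\<bar> \<le> \<alpha> * \<epsilon> * (real (n - 1) * h) * K"
  proof -
    have "\<alpha> * \<bar>\<Sum>l = 1..n - 1. Hk l\<bar> \<le> \<alpha> * (real (n - 1) * (h * (\<epsilon> * K)))"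
      using Habs al by (simp add: mult_left_mono)
    then show ?thesis by (simp add: mult_ac)
  qed
  have t0: "\<bar>R\<bar> \<le> M * (h powr (2 - \<alpha>) * (\<alpha> / (2 * (1 - \<alpha>) * (2 - \<alpha>))))"
  proof -
    have "\<alpha> * M / 2 * (h powr (2 - \<alpha>) / ((1 - \<alpha>) * (2 - \<alpha>))) = M * (h powr (2 - \<alpha>) * (\<alpha> / (2 * (1 - \<alpha>) * (2 - \<alpha>))))"
      using al by (simp add: field_simps)
    then show ?thesis using Rb by simp
  qed
  have tri: "\<bar>R - \<alpha> * (\<Sum>l = 1..n - 1. S l) - \<alpha> * (\<Sum>l = 1..n - 1. Hk l)\<bar>
      \<le> \<bar>R\<bar> + \<alpha> * \<bar>\<Sum>l = 1..n - 1. S l\<bar> + \<alpha> * \<bar>\<Sum>l = 1..n - 1. Hk l\<bar>"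
  proof -
    have g: "\<bar>x - y - z\<bar> \<le> \<bar>x\<bar> + \<bar>y\<bar> + \<bar>z\<bar>" for x y z :: real by arith
    have "\<bar>\<alpha> * (\<Sum>l = 1..n - 1. S l)\<bar> = \<alpha> * \<bar>\<Sum>l = 1..n - 1. S l\<bar>"
      "\<bar>\<alpha> * (\<Sum>l = 1..n - 1. Hk l)\<bar> = \<alpha> * \<bar>\<Sum>l = 1..n - 1. Hk l\<bar>"
      using al by (simp_all add: abs_mult)
    then show ?thesis using g[of R "\<alpha> * (\<Sum>l = 1..n - 1. S l)" "\<alpha> * (\<Sum>l = 1..n - 1. Hk l)"] by linarith
  qed
  have "M * (h powr (2 - \<alpha>) * (\<alpha> / (2 * (1 - \<alpha>) * (2 - \<alpha>)))) + M * (h powr (2 - \<alpha>) * (\<alpha> / 2 * Jf + 1 / 12))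
      = M * h powr (2 - \<alpha>) * (\<alpha> / (2 * (1 - \<alpha>) * (2 - \<alpha>)) + \<alpha> / 2 * Jf + 1 / 12)"
    by (simp add: algebra_simps)
  also have "\<dots> = M * h powr (2 - \<alpha>) * Cc / (1 - \<alpha>)" by (simp only: cid times_divide_eq_right)
  finally have sumeq: "M * (h powr (2 - \<alpha>) * (\<alpha> / (2 * (1 - \<alpha>) * (2 - \<alpha>)))) + M * (h powr (2 - \<alpha>) * (\<alpha> / 2 * Jf + 1 / 12))
      = M * h powr (2 - \<alpha>) * Cc / (1 - \<alpha>)" .
  have main: "\<bar>Gamma (1 - \<alpha>) * (caputo \<alpha> du tn - fast_caputo \<alpha> h Nexp s \<omega> uv n)\<bar>
      \<le> M * h powr (2 - \<alpha>) * Cc / (1 - \<alpha>) + \<alpha> * \<epsilon> * (real (n - 1) * h) * K"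
    unfolding key using tri t0 t1 t2 sumeq by linarith
  have "\<bar>caputo \<alpha> du tn - fast_caputo \<alpha> h Nexp s \<omega> uv n\<bar>
      = \<bar>Gamma (1 - \<alpha>) * (caputo \<alpha> du tn - fast_caputo \<alpha> h Nexp s \<omega> uv n)\<bar> / Gamma (1 - \<alpha>)"
    using G1 by (simp add: abs_mult)
  also have "\<dots> \<le> (M * h powr (2 - \<alpha>) * Cc / (1 - \<alpha>) + \<alpha> * \<epsilon> * (real (n - 1) * h) * K) / Gamma (1 - \<alpha>)"
    by (rule divide_right_mono[OF main less_imp_le[OF G1]])
  also have "\<dots> = h powr (2 - \<alpha>) / Gamma (2 - \<alpha>) * Cc * M + \<alpha> * \<epsilon> * (real (n - 1) * h) / Gamma (1 - \<alpha>) * K"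
  proof -
    have "(M * h powr (2 - \<alpha>) * Cc / (1 - \<alpha>) + \<alpha> * \<epsilon> * (real (n - 1) * h) * K) / Gamma (1 - \<alpha>)
        = (M * h powr (2 - \<alpha>) * Cc) / ((1 - \<alpha>) * Gamma (1 - \<alpha>)) + (\<alpha> * \<epsilon> * (real (n - 1) * h) * K) / Gamma (1 - \<alpha>)"
      by (simp add: add_divide_distrib divide_divide_eq_left)
    also have "\<dots> = h powr (2 - \<alpha>) / ((1 - \<alpha>) * Gamma (1 - \<alpha>)) * Cc * M + \<alpha> * \<epsilon> * (real (n - 1) * h) / Gamma (1 - \<alpha>) * K"
      by simp
    finally show ?thesis unfolding G2 .
  qed
  finally have fin: "\<bar>caputo \<alpha> du tn - fast_caputo \<alpha> h Nexp s \<omega> uv n\<bar>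
      \<le> h powr (2 - \<alpha>) / Gamma (2 - \<alpha>) * Cc * M + \<alpha> * \<epsilon> * (real (n - 1) * h) / Gamma (1 - \<alpha>) * K" .
  then show ?thesis unfolding Cc_def M_def K_def uv_def tn_def h_def .
  
qed


end
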